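(* Let $\alpha\in\mathbb{N}_0$. For every $y\in C^{(2\alpha+4)}[0,\infty)$, $$(-1)^{\alpha+1}e^x x\,D_x^{\alpha+2}\big\{e^{-x}D_x^{\alpha+2}[x^{\alpha+1}y(x)]\big\}=\sum_{i=1}^{2\alpha+4}d_i^{\alpha}(x)\,D_x^i y(x),$$ where $$d_i^{\alpha}(x)=\sum_{j=\max(1,\,i-\alpha-2)}^{\min(i,\alpha+2)}(-1)^{i+j+1}\binom{\alpha+1}{j-1}\binom{\alpha+2}{i-j}(i+1)_{\alpha+2-j}\,x^j.$$
   Context: $D_x^i$ denotes the $i$-fold derivative in $x$; $(a)_k=a(a+1)\cdots(a+k-1)$ is the Pochhammer symbol. *)

theory Defs
  imports "HOL-Analysis.Analysis"
begin

definition Dx :: "nat \<Rightarrow> (real \<Rightarrow> real) \<Rightarrow> real \<Rightarrow> real" where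
  "Dx i f = ((\<lambda>g x. vector_derivative g (at x within {0..})) ^^ i) f"

definition C_halfline :: "nat \<Rightarrow> (real \<Rightarrow> real) \<Rightarrow> bool" where
  "C_halfline k y \<longleftrightarrow>
     (\<forall>i<k. \<forall>x\<ge>0. (Dx i y has_vector_derivative Dx (Suc i) y x) (at x within {0..}))
     \<and> continuous_on {0..} (Dx k y)"

definition d_coeff :: "nat \<Rightarrow> nat \<Rightarrow> real \<Rightarrow> real" where
  "d_coeff \<alpha> i x = (\<Sum>j = max 1 (i - \<alpha> - 2) .. min i (\<alpha> + 2).
      (-1) ^ (i + j + 1) * real ((\<alpha> + 1) choose (j - 1)) * real ((\<alpha> + 2) choose (i - j))
      * pochhammer (real (i + 1)) (\<alpha> + 2 - j) * x ^ j)"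

end

theory Submission imports Defs begin

lemma notbot: "(x::real) \<ge> 0 \<Longrightarrow> at x within {0..} \<noteq> bot"
proof -
  assume "x \<ge> 0"
  have "at_right x \<le> at x within {0..}"
    by (rule at_le) (use \<open>x \<ge> 0\<close> in auto)
  moreover have "at_right x \<noteq> (bot :: real filter)" by simp
  ultimately show ?thesis by (metis bot_unique)
qed

lemma Dx_Suc: "Dx (Suc i) f x = vector_derivative (Dx i f) (at x within {0..})"
  by (simp add: Dx_def)

lemma Dx_0: "Dx 0 f = f" by (simp add: Dx_def)

definition isjet :: "nat \<Rightarrow> (nat \<Rightarrow> real \<Rightarrow> real) \<Rightarrow> bool" where
 "isjet n F \<longleftrightarrow> (\<forall>i<n. \<forall>x\<ge>0. (F i has_vector_derivative F (Suc i) x) (at x within {0..}))"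

lemma jet_Dx:
  assumes "isjet n F" "\<forall>x\<ge>0. F 0 x = f x"
  shows "i \<le> n \<Longrightarrow> x \<ge> 0 \<Longrightarrow> Dx i f x = F i x"
proof (induction i arbitrary: x)
  case 0 then show ?case using assms(2) by (simp add: Dx_0)
next
  case (Suc i)
  have "(F i has_vector_derivative F (Suc i) x) (at x within {0..})"
    using assms(1) Suc.prems unfolding isjet_def by auto
  then have "(Dx i f has_vector_derivative F (Suc i) x) (at x within {0..})"
    by (rule has_vector_derivative_transform[rotated 2]) (use Suc in auto)
  then show ?case unfolding Dx_Suc using vector_derivative_within notbot Suc.prems by blast
qed

lemma leib_step:
  fixes a b :: "nat \<Rightarrow> real"
  shows "(\<Sum>k\<le>i. real (i choose k) * (a (Suc k) * b (i-k) + a k * b (Suc (i-k))))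
       = (\<Sum>k\<le>Suc i. real (Suc i choose k) * a k * b (Suc i - k))"
proof -
  have r: "(\<Sum>k\<le>Suc i. real (Suc i choose k) * a k * b (Suc i - k))
     = a 0 * b (Suc i) + (\<Sum>k\<le>i. real (i choose k) * a (Suc k) * b (i-k))
        + (\<Sum>k\<le>i. real (i choose Suc k) * a (Suc k) * b (i-k))"
    apply (subst sum.atMost_Suc_shift)
    apply (simp del: sum.atMost_Suc add: sum.distrib algebra_simps)
    done
  have s: "(\<Sum>k\<le>i. real (i choose k) * a k * b (Suc (i-k)))
     = (\<Sum>k\<le>Suc i. real (i choose k) * a k * b (Suc i - k))"
    by (simp add: Suc_diff_le)
  also have "\<dots> = a 0 * b (Suc i) + (\<Sum>k\<le>i. real (i choose Suc k) * a (Suc k) * b (i-k))"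
    by (subst sum.atMost_Suc_shift) (simp del: sum.atMost_Suc)
  finally show ?thesis using r by (simp add: sum.distrib algebra_simps)
qed

lemma jet_mult:
  assumes "isjet n F" "isjet n G"
  shows "isjet n (\<lambda>m x. \<Sum>k\<le>m. real (m choose k) * F k x * G (m-k) x)"
  unfolding isjet_def
proof (intro allI impI)
  fix i x assume i: "i < n" and x: "(0::real) \<le> x"
  have "((\<lambda>x. \<Sum>k\<le>i. real (i choose k) * F k x * G (i-k) x) has_field_derivative
        (\<Sum>k\<le>i. real (i choose k) * (F (Suc k) x * G (i-k) x + F k x * G (Suc (i-k)) x))) (at x within {0..})"
  proof (intro DERIV_sum)
    fix k assume k: "k \<in> {..i}"
    have f: "(F k has_field_derivative F (Suc k) x) (at x within {0..})"
      using assms(1) k i x unfolding isjet_def has_real_derivative_iff_has_vector_derivative by auto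
    have g: "(G (i-k) has_field_derivative G (Suc (i-k)) x) (at x within {0..})"
      using assms(2) k i x unfolding isjet_def has_real_derivative_iff_has_vector_derivative by auto
    show "((\<lambda>x. real (i choose k) * F k x * G (i-k) x) has_field_derivative
        real (i choose k) * (F (Suc k) x * G (i-k) x + F k x * G (Suc (i-k)) x)) (at x within {0..})"
      using DERIV_cmult[OF DERIV_mult[OF f g], of "real (i choose k)"]
      by (simp add: algebra_simps)
  qed
  then show "((\<lambda>x. \<Sum>k\<le>i. real (i choose k) * F k x * G (i-k) x) has_vector_derivative
        (\<Sum>k\<le>Suc i. real (Suc i choose k) * F k x * G (Suc i - k) x)) (at x within {0..})"
    unfolding has_real_derivative_iff_has_vector_derivative[symmetric]
    using leib_step[of i "\<lambda>k. F k x" "\<lambda>k. G k x"] by simp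
qed


lemma ffact_fact: "l \<le> p \<Longrightarrow> (\<Prod>t<l. real (p - t)) * fact (p - l) = fact p"
proof (induction l)
  case 0 then show ?case by simp
next
  case (Suc l)
  have "p - l = Suc (p - Suc l)" using Suc.prems by arith
  then have "(fact (p - l) :: real) = real (p - l) * fact (p - Suc l)"
    by (metis fact_Suc of_nat_Suc)
  have "(\<Prod>t<Suc l. real (p - t)) * fact (p - Suc l) = (\<Prod>t<l. real (p - t)) * (real (p - l) * fact (p - Suc l))"
    by (simp only: prod.lessThan_Suc mult.assoc)
  also have "\<dots> = fact p" using Suc \<open>(fact (p - l) :: real) = _\<close> by simp
  finally show ?case .
qed

lemma sign_eq:
  assumes "m \<le> A + 2"
  shows "(-1::real)^(A+1) * (-1)^(A+2-m) = (-1)^(j+m+j+1)"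
proof -
  obtain r where r: "A + 2 = m + r" using assms le_iff_add by blast
  have "(-1::real)^(A+1) * (-1)^(A+2-m) = (-1)^(A+1+r)" using r by (simp add: power_add)
  also have "\<dots> = (-1)^(A+1+r+2)" by simp
  also have "A+1+r+2 = (m+1) + 2*r" using r by arith
  also have "(-1::real)^((m+1) + 2*r) = (-1)^(m+1)" by (simp add: power_add power_mult)
  also have "\<dots> = (-1)^((m+1) + 2*j)" by (simp add: power_add power_mult)
  also have "(m+1) + 2*j = j+m+j+1" by simp
  finally show ?thesis .
qed

lemma fact_id:
  assumes "1 \<le> j" "j \<le> A + 2"
  shows "real ((A+2+m) choose (A+2-j)) * (\<Prod>t<A+2-j. real (A+1-t))
       = real ((A+1) choose (j-1)) * pochhammer (real (j+m+1)) (A+2-j)"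
proof -
  define l where "l = A + 2 - j"
  define n where "n = j + m"
  have An: "A + 2 + m = n + l" "A + 1 - l = j - 1" "A+1 - (j-1) = l" using assms by (auto simp: l_def n_def)
  have e1: "real ((n+l) choose l) = fact (n+l) / (fact l * fact n)"
    by (subst binomial_fact) auto
  have e2: "(\<Prod>t<l. real (A+1-t)) = fact (A+1) / fact (j-1)"
    using ffact_fact[of l "A+1"] An assms by (simp add: l_def field_simps)
  have e3: "real ((A+1) choose (j-1)) = fact (A+1) / (fact (j-1) * fact l)"
    using An assms by (subst binomial_fact) auto
  have "(fact (n+l) :: real) = pochhammer 1 (n+l)" by (simp add: pochhammer_fact)
  also have "\<dots> = fact n * pochhammer (1 + real n) l"
    by (simp add: pochhammer_product' pochhammer_fact)
  finally have e4: "pochhammer (real (j+m+1)) l = fact (n+l) / fact n"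
    by (simp add: n_def field_simps)
  show ?thesis unfolding l_def[symmetric] An(1) e1 e2 e3 e4 by (simp add: field_simps)
qed


definition Pw :: "nat \<Rightarrow> nat \<Rightarrow> real \<Rightarrow> real" where
  "Pw A k x = (\<Prod>t<k. real (A+1-t)) * x^(A+1-k)"

lemma Pw_zero: "l > A + 1 \<Longrightarrow> Pw A l x = 0"
proof -
  assume l: "l > A + 1"
  have "(\<Prod>t<l. real (A+1-t)) = 0"
    by (rule prod_zero) (use l in \<open>auto intro!: bexI[of _ "A+1"]\<close>)
  then show ?thesis unfolding Pw_def by simp
qed

lemma Pw_nz: "Pw A l x \<noteq> 0 \<Longrightarrow> l \<le> A + 1"
  using Pw_zero not_le by blast

lemma term_eq:
  fixes x :: real
  assumes "1 \<le> j" "j \<le> A + 2" "m \<le> A + 2"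
  shows "(-1)^(A+1) * x * (real ((A+2) choose (A+2-m)) * (-1)^(A+2-m)
          * (real ((A+2+(A+2-(A+2-m))) choose (A+2-j)) * Pw A (A+2-j) x * Y (A+2+(A+2-(A+2-m)) - (A+2-j))))
       = (-1) ^ ((j+m) + j + 1) * real ((A + 1) choose (j - 1)) * real ((A + 2) choose ((j+m) - j))
      * pochhammer (real ((j+m) + 1)) (A + 2 - j) * x ^ j * Y (j+m)"
proof -
  have s1: "A+2-(A+2-m) = m" "A+2+m-(A+2-j) = j+m" "A+1-(A+2-j) = j - 1" "j+m-j = m"
    using assms by auto
  have s2: "(A+2) choose (A+2-m) = (A+2) choose m" using assms binomial_symmetric by metis
  have s3: "x * x^(j-1) = x^j" using assms by (cases j) auto
  have f: "real ((A+2+m) choose (A+2-j)) * (\<Prod>t<A+2-j. real (A+1-t))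
       = real ((A+1) choose (j-1)) * pochhammer (real (j+m+1)) (A+2-j)"
    by (rule fact_id) (use assms in auto)
  have sg: "(-1::real)^(A+1) * (-1)^(A+2-m) = (-1)^(j+m+j+1)" by (rule sign_eq) (use assms in auto)
  have "(-1)^(A+1) * x * (real ((A+2) choose (A+2-m)) * (-1)^(A+2-m)
          * (real ((A+2+(A+2-(A+2-m))) choose (A+2-j)) * Pw A (A+2-j) x * Y (A+2+(A+2-(A+2-m)) - (A+2-j))))
     = ((-1::real)^(A+1) * (-1)^(A+2-m)) * real ((A+2) choose m) *
       (real ((A+2+m) choose (A+2-j)) * (\<Prod>t<A+2-j. real (A+1-t))) * (x * x^(j-1)) * Y (j+m)"
    unfolding Pw_def s1 s2 by (simp only: mult_ac)
  also have "\<dots> = (-1) ^ ((j+m) + j + 1) * real ((A + 1) choose (j - 1)) * real ((A + 2) choose ((j+m) - j))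
      * pochhammer (real ((j+m) + 1)) (A + 2 - j) * x ^ j * Y (j+m)"
    unfolding sg f s3 s1 by (simp only: mult_ac)
  finally show ?thesis .
qed

lemma comb_final:
  fixes A :: nat and x :: real and Y :: "nat \<Rightarrow> real"
  shows "(-1)^(A+1) * x * (\<Sum>k\<le>A+2. real ((A+2) choose k) * (-1)^k *
           (\<Sum>l\<le>A+2+(A+2-k). real ((A+2+(A+2-k)) choose l) * Pw A l x * Y (A+2+(A+2-k)-l)))
       = (\<Sum>i=1..2*A+4. d_coeff A i x * Y i)"
proof -
  define V where "V = (\<lambda>k l. (-1)^(A+1) * x * (real ((A+2) choose k) * (-1)^k *
           (real ((A+2+(A+2-k)) choose l) * Pw A l x * Y (A+2+(A+2-k)-l))))"
  define U where "U = (\<lambda>i j. (-1) ^ (i + j + 1) * real ((A + 1) choose (j - 1)) * real ((A + 2) choose (i - j))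
      * pochhammer (real (i + 1)) (A + 2 - j) * x ^ j * Y i)"
  define J where "J = (\<lambda>i. {max 1 (i - A - 2) .. min i (A + 2)})"
  have "(-1)^(A+1) * x * (\<Sum>k\<le>A+2. real ((A+2) choose k) * (-1)^k *
           (\<Sum>l\<le>A+2+(A+2-k). real ((A+2+(A+2-k)) choose l) * Pw A l x * Y (A+2+(A+2-k)-l)))
     = (\<Sum>k\<le>A+2. \<Sum>l\<le>A+2+(A+2-k). V k l)"
    unfolding V_def by (simp only: sum_distrib_left)
  also have "\<dots> = (\<Sum>(k,l)\<in>Sigma {..A+2} (\<lambda>k. {..A+2+(A+2-k)}). V k l)"
    by (rule sum.Sigma) auto
  also have "\<dots> = (\<Sum>(k,l)\<in>Sigma {..A+2} (\<lambda>k. {..A+1}). V k l)"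
    apply (rule sum.mono_neutral_right)
    apply (auto simp: V_def)
    using Pw_nz by fastforce
  also have "\<dots> = (\<Sum>(i,j)\<in>Sigma {1..2*A+4} J. U i j)"
  proof -
  have "(\<Sum>(i,j)\<in>Sigma {1..2*A+4} J. U i j) = (\<Sum>(k,l)\<in>Sigma {..A+2} (\<lambda>k. {..A+1}). V k l)"
  proof (rule sum.reindex_bij_witness[where i = "\<lambda>(k,l). ((A+2-k)+(A+2-l), A+2-l)"
                                       and j = "\<lambda>(i,j). (A+2-(i-j), A+2-j)"])
    fix p assume p: "p \<in> Sigma {1..2*A+4} J"
    obtain i j where ij: "p = (i,j)" by (cases p)
    have h: "1 \<le> j" "j \<le> A + 2" "j \<le> i" "i - j \<le> A + 2" "i \<le> 2*A+4"
      using p unfolding ij J_def by auto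
    show "(case (case p of (i, j) \<Rightarrow> (A + 2 - (i - j), A + 2 - j)) of (k, l) \<Rightarrow> (A + 2 - k + (A + 2 - l), A + 2 - l)) = p"
      using h ij by auto
    show "(case p of (i, j) \<Rightarrow> (A + 2 - (i - j), A + 2 - j)) \<in> Sigma {..A + 2} (\<lambda>k. {..A + 1})"
      using h ij by auto
    have "V (A + 2 - (i - j)) (A + 2 - j) = U (j + (i-j)) j"
      unfolding V_def U_def by (rule term_eq) (use h in auto)
    then show "(case case p of (i, j) \<Rightarrow> (A + 2 - (i - j), A + 2 - j) of (k, l) \<Rightarrow> V k l) = (case p of (i, j) \<Rightarrow> U i j)"
      using h ij by simp
  next
    fix p assume p: "p \<in> Sigma {..A + 2} (\<lambda>k. {..A + 1})"
    obtain k l where kl: "p = (k,l)" by (cases p)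
    have h: "k \<le> A+2" "l \<le> A+1" using p kl by auto
    show "(case case p of (k, l) \<Rightarrow> (A + 2 - k + (A + 2 - l), A + 2 - l) of (i, j) \<Rightarrow> (A + 2 - (i - j), A + 2 - j)) = p"
      using h kl by auto
    show "(case p of (k, l) \<Rightarrow> (A + 2 - k + (A + 2 - l), A + 2 - l)) \<in> Sigma {1..2 * A + 4} J"
      using h kl unfolding J_def by auto
  qed
  then show ?thesis by simp
  qed
  also have "\<dots> = (\<Sum>i=1..2*A+4. \<Sum>j\<in>J i. U i j)"
    by (rule sum.Sigma[symmetric]) (auto simp: J_def)
  also have "\<dots> = (\<Sum>i=1..2*A+4. d_coeff A i x * Y i)"
    unfolding d_coeff_def J_def U_def by (simp add: sum_distrib_right)
  finally show ?thesis .
qed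


lemma Pw_jet: "isjet n (Pw A)"
  unfolding isjet_def
proof (intro allI impI)
  fix i x assume "i < n" "(0::real) \<le> x"
  have "((\<lambda>x. (\<Prod>t<i. real (A+1-t)) * x^(A+1-i)) has_field_derivative
        (\<Prod>t<i. real (A+1-t)) * (real (A+1-i) * x^(A+1-i-Suc 0))) (at x within {0..})"
    by (rule DERIV_cmult, rule DERIV_pow)
  moreover have "A+1-i-Suc 0 = A+1-Suc i" by simp
  ultimately show "(Pw A i has_vector_derivative Pw A (Suc i) x) (at x within {0..})"
    unfolding Pw_def has_real_derivative_iff_has_vector_derivative[symmetric]
    by (simp add: mult_ac)
qed

lemma E_jet: "isjet n (\<lambda>k x. (-1)^k * exp (- x))"
  unfolding isjet_def
proof (intro allI impI)
  fix i x assume "i < n" "(0::real) \<le> x"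
  have "((\<lambda>x. (-1)^i * exp (- x)) has_field_derivative (-1)^i * (exp (- x) * (- 1))) (at x within {0..})"
    by (intro DERIV_cmult DERIV_fun_exp derivative_intros)
  then show "((\<lambda>x. (-1)^i * exp (- x)) has_vector_derivative (-1)^(Suc i) * exp (- x)) (at x within {0..})"
    unfolding has_real_derivative_iff_has_vector_derivative[symmetric] by simp
qed

theorem corollary2p4:
  fixes \<alpha> :: nat and y :: "real \<Rightarrow> real"
  assumes "C_halfline (2 * \<alpha> + 4) y"
  shows "\<forall>x\<ge>0. (-1) ^ (\<alpha> + 1) * exp x * x *
            Dx (\<alpha> + 2) (\<lambda>t. exp (- t) * Dx (\<alpha> + 2) (\<lambda>s. s ^ (\<alpha> + 1) * y s) t) x
          = (\<Sum>i = 1 .. 2 * \<alpha> + 4. d_coeff \<alpha> i x * Dx i y x)"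
proof (intro allI impI)
  fix x :: real assume x: "x \<ge> 0"
  let ?A = \<alpha>
  have Yj: "isjet (2*?A+4) (\<lambda>i. Dx i y)"
    using assms unfolding C_halfline_def isjet_def by auto
  define P where "P = (\<lambda>m x. \<Sum>k\<le>m. real (m choose k) * Pw ?A k x * Dx (m-k) y x)"
  have Pj: "isjet (2*?A+4) P" unfolding P_def by (rule jet_mult[OF Pw_jet Yj])
  have DxP: "Dx m (\<lambda>s. s^(?A+1) * y s) t = P m t" if "m \<le> 2*?A+4" "t \<ge> 0" for m t
    by (rule jet_Dx[OF Pj]) (use that in \<open>auto simp: P_def Pw_def Dx_0\<close>)
  define Q where "Q = (\<lambda>k. P (?A+2+k))"
  have Qj: "isjet (?A+2) Q" using Pj unfolding isjet_def Q_def by auto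
  define R where "R = (\<lambda>m x. \<Sum>k\<le>m. real (m choose k) * ((-1)^k * exp (- x)) * Q (m-k) x)"
  have Rj: "isjet (?A+2) R" unfolding R_def by (rule jet_mult[OF E_jet Qj])
  have DxR: "Dx (?A+2) (\<lambda>t. exp (- t) * Dx (?A + 2) (\<lambda>s. s ^ (?A + 1) * y s) t) x = R (?A+2) x"
    by (rule jet_Dx[OF Rj]) (use x DxP[of "?A+2"] in \<open>auto simp: R_def Q_def\<close>)
  have "(-1) ^ (?A + 1) * exp x * x * R (?A+2) x
     = (-1)^(?A+1) * x * (\<Sum>k\<le>?A+2. real ((?A+2) choose k) * (-1)^k *
           (\<Sum>l\<le>?A+2+(?A+2-k). real ((?A+2+(?A+2-k)) choose l) * Pw ?A l x * Dx (?A+2+(?A+2-k)-l) y x))"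
  proof -
    have "exp x * R (?A+2) x = (\<Sum>k\<le>?A+2. real ((?A+2) choose k) * (-1)^k *
           (\<Sum>l\<le>?A+2+(?A+2-k). real ((?A+2+(?A+2-k)) choose l) * Pw ?A l x * Dx (?A+2+(?A+2-k)-l) y x))"
      unfolding R_def Q_def P_def sum_distrib_left
      by (intro sum.cong refl) (simp add: exp_minus field_simps)
    then show ?thesis by (simp add: mult_ac)
  qed
  also have "\<dots> = (\<Sum>i = 1 .. 2 * ?A + 4. d_coeff ?A i x * Dx i y x)"
    by (rule comb_final)
  finally show "(-1) ^ (\<alpha> + 1) * exp x * x *
            Dx (\<alpha> + 2) (\<lambda>t. exp (- t) * Dx (\<alpha> + 2) (\<lambda>s. s ^ (\<alpha> + 1) * y s) t) x
          = (\<Sum>i = 1 .. 2 * \<alpha> + 4. d_coeff \<alpha> i x * Dx i y x)" unfolding DxR .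
qed

end
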